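(* Let $(\mathcal{R},\mu)$ be resonant, let $\|\cdot\|_X$ be an r.i. quasi-Banach function norm on $\mathcal{M}(\mathcal{R},\mu)$ satisfying (P5), and let $\|\cdot\|_{\overline{X}}$ be the r.i. quasi-Banach function norm on $\mathcal{M}([0,\infty),\lambda)$ constructed as in the context (it also satisfies (P5)). Denote by $\|\cdot\|_{X'}$ and $\|\cdot\|_{(\overline{X})'}$ the associate norms of $\|\cdot\|_X$ and $\|\cdot\|_{\overline{X}}$, respectively. Then for every $f\in\mathcal{M}(\mathcal{R},\mu)$, $$\|f\|_{X'}=\|f^*\|_{(\overline{X})'}.$$
   Context: Let $(\mathcal{R},\mu)$ be a $\sigma$-finite measure space; $\mathcal{M}$ denotes the $\mu$-measurable extended complex-valued functions (identified a.e.), $\mathcal{M}_+$ the non-negative ones. $f_*(s)=\mu(\{|f|>s\})$, $f^*(t)=\inf\{s\ge0;\,f_*(s)\le t\}$ (non-increasing rearrangement). $(\mathcal{R},\mu)$ is called resonant if it is either non-atomic or completely atomic with all atoms of equal measure. A quasi-Banach function norm is a map $\|\cdot\|:\mathcal{M}\to[0,\infty]$ with $\|f\|=\||f|\|$ such that on $\mathcal{M}_+$: (Q1) $\|af\|=|a|\|f\|$, $\|f\|=0\iff f=0$ a.e., and there is $C\ge1$ (modulus of concavity) with $\|f+g\|\le C(\|f\|+\|g\|)$; (P2) $f\le g$ a.e. implies $\|f\|\le\|g\|$; (P3) $f_n\uparrow f$ a.e. implies $\|f_n\|\uparrow\|f\|$; (P4) $\|\chi_E\|<\infty$ whenever $\mu(E)<\infty$.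 Property (P5): for every $E$ with $\mu(E)<\infty$ there is $C_E<\infty$ with $\int_E f\,d\mu\le C_E\|f\|$ for all $f\in\mathcal{M}_+$. The norm is rearrangement-invariant (r.i.) if $\|f\|=\|g\|$ whenever $f^*=g^*$. For an r.i. quasi-Banach function norm $\|\cdot\|_X$ satisfying (P5), its associate norm is $\|f\|_{X'}=\sup\{\int_0^\infty f^*g^*\,d\lambda;\ \|g\|_X\le1\}$. Construction of $\|\cdot\|_{\overline{X}}$: (i) If $(\mathcal{R},\mu)$ is non-atomic, fix a measure-preserving map $\sigma$ from $(\mathcal{R},\mu)$ onto $[0,\mu(\mathcal{R}))$ (with Lebesgue measure $\lambda$), and for $h\in\mathcal{M}([0,\mu(\mathcal{R})),\lambda)$ put $\|h\|_{\overline{X_0}}=\|h\circ\sigma\|_X$. (ii) If $(\mathcal{R},\mu)$ is completely atomic with all atoms of measure $\beta\in(0,\infty)$, fix an enumeration $(e_n)_{n\in\mathcal{N}}$ of the atoms, $\mathcal{N}=\{n\in\mathbb{N};\,\beta n<\mu(\mathcal{R})\}$ ($0\in\mathbb{N}$), define $T(h)(e_n)=\beta^{-1}\int_{\beta n}^{\beta(n+1)}h^*\,d\lambda$ for $n\in\mathcal{N}$, and put $\|h\|_{\overline{X_0}}=\|T(h)\|_X$. In both cases define, for $f\in\mathcal{M}([0,\infty),\lambda)$, $\|f\|_{\overline{X}}=\|f^*\chi_{[0,\mu(\mathcal{R}))}\|_{\overline{X_0}}$. *)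

theory Defs
  imports "HOL-Analysis.Analysis"
begin

text \<open>Functions are represented through their modulus |f| :: 'a => ennreal
  (the norms only depend on |f|).\<close>

definition distrib :: "'a measure \<Rightarrow> ('a \<Rightarrow> ennreal) \<Rightarrow> ennreal \<Rightarrow> ennreal" where
  "distrib M f s = emeasure M {x \<in> space M. f x > s}"

definition rearr :: "'a measure \<Rightarrow> ('a \<Rightarrow> ennreal) \<Rightarrow> real \<Rightarrow> ennreal" where
  "rearr M f t = Inf {s. distrib M f s \<le> ennreal t}"

definition halfline :: "real measure" where
  "halfline = lebesgue_on {0..}"

definition qBFN :: "'a measure \<Rightarrow> (('a \<Rightarrow> ennreal) \<Rightarrow> ennreal) \<Rightarrow> bool" where
  "qBFN M N \<longleftrightarrow>
     \<comment> \<open>(Q1)\<close>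
     (\<forall>f \<in> borel_measurable M. \<forall>a::real. a \<ge> 0 \<longrightarrow> N (\<lambda>x. ennreal a * f x) = ennreal a * N f) \<and>
     (\<forall>f \<in> borel_measurable M. N f = 0 \<longleftrightarrow> (AE x in M. f x = 0)) \<and>
     (\<exists>C::real. C \<ge> 1 \<and> (\<forall>f \<in> borel_measurable M. \<forall>g \<in> borel_measurable M.
         N (\<lambda>x. f x + g x) \<le> ennreal C * (N f + N g))) \<and>
     \<comment> \<open>(P2)\<close>
     (\<forall>f \<in> borel_measurable M. \<forall>g \<in> borel_measurable M.
         (AE x in M. f x \<le> g x) \<longrightarrow> N f \<le> N g) \<and>
     \<comment> \<open>(P3)\<close>
     (\<forall>F f. (\<forall>n. F n \<in> borel_measurable M) \<longrightarrow> f \<in> borel_measurable M \<longrightarrow>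
         (AE x in M. incseq (\<lambda>n. F n x) \<and> (\<lambda>n. F n x) \<longlonglongrightarrow> f x) \<longrightarrow>
         incseq (\<lambda>n. N (F n)) \<and> (\<lambda>n. N (F n)) \<longlonglongrightarrow> N f) \<and>
     \<comment> \<open>(P4)\<close>
     (\<forall>E \<in> sets M. emeasure M E < \<infinity> \<longrightarrow> N (indicator E) < \<infinity>)"

definition P5 :: "'a measure \<Rightarrow> (('a \<Rightarrow> ennreal) \<Rightarrow> ennreal) \<Rightarrow> bool" where
  "P5 M N \<longleftrightarrow> (\<forall>E \<in> sets M. emeasure M E < \<infinity> \<longrightarrow>
     (\<exists>C::real. \<forall>f \<in> borel_measurable M. (\<integral>\<^sup>+x\<in>E. f x \<partial>M) \<le> ennreal C * N f))"

definition rearr_inv :: "'a measure \<Rightarrow> (('a \<Rightarrow> ennreal) \<Rightarrow> ennreal) \<Rightarrow> bool" where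
  "rearr_inv M N \<longleftrightarrow> (\<forall>f \<in> borel_measurable M. \<forall>g \<in> borel_measurable M.
     (\<forall>t\<ge>0. rearr M f t = rearr M g t) \<longrightarrow> N f = N g)"

definition assoc_norm :: "'a measure \<Rightarrow> (('a \<Rightarrow> ennreal) \<Rightarrow> ennreal) \<Rightarrow> ('a \<Rightarrow> ennreal) \<Rightarrow> ennreal" where
  "assoc_norm M N f = (SUP g \<in> {g \<in> borel_measurable M. N g \<le> 1}.
       \<integral>\<^sup>+t. rearr M f t * rearr M g t \<partial>halfline)"

definition atom :: "'a measure \<Rightarrow> 'a set \<Rightarrow> bool" where
  "atom M A \<longleftrightarrow> A \<in> sets M \<and> emeasure M A > 0 \<and>
     (\<forall>B \<in> sets M. B \<subseteq> A \<longrightarrow> emeasure M B = 0 \<or> emeasure M (A - B) = 0)"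

definition non_atomic :: "'a measure \<Rightarrow> bool" where
  "non_atomic M \<longleftrightarrow> \<not> (\<exists>A. atom M A)"

definition range_int :: "'a measure \<Rightarrow> real set" where
  "range_int M = {t. 0 \<le> t \<and> ennreal t < emeasure M (space M)}"

definition meas_pres_onto :: "'a measure \<Rightarrow> ('a \<Rightarrow> real) \<Rightarrow> bool" where
  "meas_pres_onto M \<sigma> \<longleftrightarrow> \<sigma> ` space M = range_int M \<and>
     (\<forall>E \<in> sets (lebesgue_on (range_int M)).
        \<sigma> -` E \<inter> space M \<in> sets M \<and> emeasure M (\<sigma> -` E \<inter> space M) = emeasure lebesgue E)"

definition atom_index :: "'a measure \<Rightarrow> real \<Rightarrow> nat set" where
  "atom_index M \<beta> = {n. ennreal (\<beta> * real n) < emeasure M (space M)}"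

definition atom_enum :: "'a measure \<Rightarrow> real \<Rightarrow> (nat \<Rightarrow> 'a set) \<Rightarrow> bool" where
  "atom_enum M \<beta> e \<longleftrightarrow> 0 < \<beta> \<and>
     (\<forall>n \<in> atom_index M \<beta>. atom M (e n) \<and> emeasure M (e n) = ennreal \<beta>) \<and>
     disjoint_family_on e (atom_index M \<beta>) \<and>
     (\<Union>n \<in> atom_index M \<beta>. e n) = space M"

definition Xbar_nonatomic ::
  "'a measure \<Rightarrow> (('a \<Rightarrow> ennreal) \<Rightarrow> ennreal) \<Rightarrow> ('a \<Rightarrow> real) \<Rightarrow> (real \<Rightarrow> ennreal) \<Rightarrow> ennreal" where
  "Xbar_nonatomic M N \<sigma> f =
     N (\<lambda>x. rearr halfline f (\<sigma> x) * indicator (range_int M) (\<sigma> x))"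

definition T_op :: "'a measure \<Rightarrow> real \<Rightarrow> (nat \<Rightarrow> 'a set) \<Rightarrow> (real \<Rightarrow> ennreal) \<Rightarrow> 'a \<Rightarrow> ennreal" where
  "T_op M \<beta> e h x = (\<Sum>n. (if n \<in> atom_index M \<beta> then indicator (e n) x else 0) *
       (ennreal (1 / \<beta>) * (\<integral>\<^sup>+t\<in>{\<beta> * real n ..< \<beta> * real (Suc n)}.
           rearr (lebesgue_on (range_int M)) h t \<partial>lebesgue)))"

definition Xbar_atomic ::
  "'a measure \<Rightarrow> (('a \<Rightarrow> ennreal) \<Rightarrow> ennreal) \<Rightarrow> real \<Rightarrow> (nat \<Rightarrow> 'a set) \<Rightarrow> (real \<Rightarrow> ennreal) \<Rightarrow> ennreal" where
  "Xbar_atomic M N \<beta> e f =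
     N (T_op M \<beta> e (\<lambda>t. rearr halfline f t * indicator (range_int M) t))"

end

theory Submission
  imports Defs
begin


lemma distrib_antimono:
  assumes f: "f \<in> borel_measurable M" and "s \<le> s'"
  shows "distrib M f s' \<le> distrib M f s"
  unfolding distrib_def
  by (rule emeasure_mono) (use assms in \<open>auto intro: order.strict_trans1\<close>)

lemma ennreal_add_inv_gt:
  fixes s :: ennreal assumes "s < top"
  shows "s < s + ennreal (1 / real (Suc n))"
proof -
  obtain r where r: "s = ennreal r" "0 \<le> r" using assms by (cases s) auto
  have "ennreal r < ennreal (r + 1 / real (Suc n))"
    using r(2) by (subst ennreal_less_iff) auto
  then show ?thesis using r by (simp add: ennreal_plus)
qed

lemma rearr_le_iff:
  assumes f: "f \<in> borel_measurable M"
  shows "rearr M f t \<le> s \<longleftrightarrow> distrib M f s \<le> ennreal t"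
proof
  assume "distrib M f s \<le> ennreal t"
  then show "rearr M f t \<le> s" unfolding rearr_def by (auto intro: Inf_lower)
next
  assume H: "rearr M f t \<le> s"
  show "distrib M f s \<le> ennreal t"
  proof (cases "s = top")
    case True
    then show ?thesis by (simp add: distrib_def)
  next
    case False
    then have st: "s < top" using top.not_eq_extremum by blast
    define c where "c n = s + ennreal (1 / real (Suc n))" for n
    define A where "A n = {x \<in> space M. c n < f x}" for n
    have Ameas: "range A \<subseteq> sets M" unfolding A_def using f by auto
    have cdec: "c m \<le> c n" if "n \<le> m" for n m
      unfolding c_def using that by (auto intro!: add_left_mono ennreal_leI frac_le)
    have inc: "incseq A" unfolding incseq_def A_def using cdec by (auto intro: order.strict_trans1)
    have ct: "c \<longlonglongrightarrow> s"
    proof -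
      have "(\<lambda>n. ennreal (1 / real (Suc n))) \<longlonglongrightarrow> ennreal 0"
        by (intro tendsto_ennrealI) (simp add: LIMSEQ_inverse_real_of_nat_add[where r=0, simplified] lim_const_over_n divide_inverse)
      then show ?thesis unfolding c_def using tendsto_add[OF tendsto_const, of _ 0 sequentially s] by simp
    qed
    have U: "(\<Union>n. A n) = {x \<in> space M. s < f x}"
    proof
      show "(\<Union>n. A n) \<subseteq> {x \<in> space M. s < f x}"
      proof
        fix x assume "x \<in> (\<Union>n. A n)"
        then obtain n where n: "x \<in> space M" "c n < f x" unfolding A_def by auto
        have "s < c n" unfolding c_def by (rule ennreal_add_inv_gt[OF st])
        then show "x \<in> {x \<in> space M. s < f x}" using n by auto
      qed
      show "{x \<in> space M. s < f x} \<subseteq> (\<Union>n. A n)"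
      proof
        fix x assume x: "x \<in> {x \<in> space M. s < f x}"
        then have "eventually (\<lambda>n. c n < f x) sequentially" using order_tendstoD(2)[OF ct] by auto
        then obtain n where "c n < f x" using eventually_sequentially by auto
        then show "x \<in> (\<Union>n. A n)" using x unfolding A_def by auto
      qed
    qed
    have each: "emeasure M (A n) \<le> ennreal t" for n
    proof -
      have "s < c n" unfolding c_def by (rule ennreal_add_inv_gt[OF st])
      then have "rearr M f t < c n" using H by (rule order.strict_trans1[rotated])
      then obtain x where x: "distrib M f x \<le> ennreal t" "x < c n" unfolding rearr_def by (auto simp: Inf_less_iff)
      have "emeasure M (A n) = distrib M f (c n)" unfolding A_def distrib_def by simp
      also have "\<dots> \<le> distrib M f x" using distrib_antimono[OF f, of x "c n"] x by simp
      finally show ?thesis using x by simp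
    qed
    have "distrib M f s = emeasure M (\<Union>n. A n)" unfolding U distrib_def by simp
    also have "\<dots> = (SUP n. emeasure M (A n))" using SUP_emeasure_incseq[OF Ameas inc] by simp
    also have "\<dots> \<le> ennreal t" using each by (auto intro: SUP_least)
    finally show ?thesis .
  qed
qed

lemma eq_by_le: fixes a b :: "'b::order" shows "(\<And>s. a \<le> s \<longleftrightarrow> b \<le> s) \<Longrightarrow> a = b"
  by (metis order.antisym order.refl)

lemma rearr_cong_distrib: "distrib M f = distrib M' g \<Longrightarrow> rearr M f = rearr M' g"
  unfolding rearr_def by simp

lemma ivl_eq: "{t::real. 0 \<le> t \<and> ennreal t < c} = (if c = top then {0..} else {0..<enn2real c})"
  by (cases c rule: ennreal_cases) (auto simp: ennreal_less_iff)

lemma ivl_sets[measurable]: "{t::real. 0 \<le> t \<and> ennreal t < c} \<in> sets borel"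
  unfolding ivl_eq by auto

lemma emeasure_Ici_top: "emeasure lborel {0::real..} = top"
proof -
  have "of_nat n \<le> emeasure lborel {0::real..}" for n
  proof -
    have "emeasure lborel {0::real..<real n} \<le> emeasure lborel {0::real..}"
      by (rule emeasure_mono) auto
    then show ?thesis by (simp add: ennreal_of_nat_eq_real_of_nat)
  qed
  then show ?thesis by (metis ennreal_SUP_of_nat_eq_top SUP_least top.extremum_unique)
qed

lemma emeasure_ivl: "emeasure lborel {t::real. 0 \<le> t \<and> ennreal t < c} = c"
  unfolding ivl_eq using emeasure_Ici_top
  by (cases c rule: ennreal_cases) auto

lemma emeasure_ivl_lebesgue: "emeasure lebesgue {t::real. 0 \<le> t \<and> ennreal t < c} = c"
  using emeasure_ivl[of c] ivl_sets[of c] by simp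

lemma rearr_less_iff:
  assumes f: "f \<in> borel_measurable M"
  shows "s < rearr M f t \<longleftrightarrow> ennreal t < distrib M f s"
  using rearr_le_iff[OF f, of t s] by auto

lemma rearr_borel: assumes f: "f \<in> borel_measurable M"
  shows "rearr M f \<in> borel_measurable borel"
proof (rule borel_measurableI_greater)
  fix y
  have "{x \<in> space borel. y < rearr M f x} = {x. ennreal x < distrib M f y}"
    using rearr_less_iff[OF f] by auto
  also have "\<dots> \<in> sets borel"
    by (intro borel_open open_Collect_less continuous_intros continuous_on_ennreal[OF continuous_on_id])
  finally show "{x \<in> space borel. y < rearr M f x} \<in> sets borel" .
qed

lemma borel_to_lebesgue_on:
  assumes "g \<in> borel_measurable borel"
  shows "g \<in> borel_measurable (lebesgue_on S)"
proof -
  have "g \<in> borel_measurable lborel" using assms by simp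
  then have "g \<in> borel_measurable lebesgue" by (rule measurable_completion)
  then show ?thesis by (rule measurable_restrict_space1)
qed

lemma rearr_meas_on: assumes f: "f \<in> borel_measurable M"
  shows "rearr M f \<in> borel_measurable (lebesgue_on S)"
  by (rule borel_to_lebesgue_on[OF rearr_borel[OF f]])

lemma distrib_le_space: assumes f: "f \<in> borel_measurable M"
  shows "distrib M f s \<le> emeasure M (space M)"
  unfolding distrib_def by (rule emeasure_mono) auto

lemma distrib_halfline_ivl: "distrib halfline F s = emeasure lebesgue {t. 0 \<le> t \<and> s < F t}"
  unfolding distrib_def halfline_def
  by (subst emeasure_restrict_space) auto

lemma distrib_rearr: assumes f: "f \<in> borel_measurable M"
  shows "distrib halfline (rearr M f) s = distrib M f s"
proof -
  have "{t. 0 \<le> t \<and> s < rearr M f t} = {t. 0 \<le> t \<and> ennreal t < distrib M f s}"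
    using rearr_less_iff[OF f] by auto
  then show ?thesis unfolding distrib_halfline_ivl using emeasure_ivl_lebesgue by simp
qed

lemma rearr_rearr: assumes f: "f \<in> borel_measurable M"
  shows "rearr halfline (rearr M f) = rearr M f"
  by (rule rearr_cong_distrib) (use distrib_rearr[OF f] in auto)

lemma rearr_antimono: "t \<le> t' \<Longrightarrow> rearr M f t' \<le> rearr M f t"
  unfolding rearr_def by (rule Inf_superset_mono) (auto intro: order.trans ennreal_leI)

lemma rearr_zero: assumes f: "f \<in> borel_measurable M" and "emeasure M (space M) \<le> ennreal t"
  shows "rearr M f t = 0"
  using rearr_le_iff[OF f, of t 0] distrib_le_space[OF f, of 0] assms(2) by auto



lemma range_int_eq: "range_int M = {t. 0 \<le> t \<and> ennreal t < emeasure M (space M)}"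
  unfolding range_int_def by simp

lemma range_int_sets: "range_int M \<in> sets lebesgue"
  unfolding range_int_eq using ivl_sets by simp

lemma sets_lebesgue_on_range: "A \<in> sets (lebesgue_on (range_int M)) \<longleftrightarrow> A \<subseteq> range_int M \<and> A \<in> sets lebesgue"
  by (rule sets_restrict_space_iff) (use range_int_sets in auto)

lemma NA_dist:
  assumes mp: "meas_pres_onto M \<sigma>" and G: "G \<in> borel_measurable halfline"
  defines "\<Phi> \<equiv> \<lambda>x. rearr halfline G (\<sigma> x) * indicator (range_int M) (\<sigma> x)"
  shows "\<Phi> \<in> borel_measurable M" "distrib M \<Phi> s = min (distrib halfline G s) (emeasure M (space M))"
proof -
  let ?m = "emeasure M (space M)"
  have inr: "\<sigma> x \<in> range_int M" if "x \<in> space M" for x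
    using mp that unfolding meas_pres_onto_def by auto
  have mp2: "\<sigma> -` E \<inter> space M \<in> sets M \<and> emeasure M (\<sigma> -` E \<inter> space M) = emeasure lebesgue E"
    if "E \<subseteq> range_int M" "E \<in> sets lebesgue" for E
  proof -
    have "E \<in> sets (lebesgue_on (range_int M))" using that sets_lebesgue_on_range by blast
    then show ?thesis using mp unfolding meas_pres_onto_def by blast
  qed
  have key: "{x \<in> space M. s < \<Phi> x} = \<sigma> -` {t. 0 \<le> t \<and> ennreal t < min (distrib halfline G s) ?m} \<inter> space M" for s
  proof -
    have "{x \<in> space M. s < \<Phi> x} = {x \<in> space M. s < rearr halfline G (\<sigma> x)}"
      unfolding \<Phi>_def using inr by auto
    also have "\<dots> = {x \<in> space M. ennreal (\<sigma> x) < distrib halfline G s}"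
      using rearr_less_iff[OF G] by auto
    also have "\<dots> = \<sigma> -` {t. 0 \<le> t \<and> ennreal t < min (distrib halfline G s) ?m} \<inter> space M"
      using inr unfolding range_int_eq by auto
    finally show ?thesis .
  qed
  have sub: "{t. 0 \<le> t \<and> ennreal t < min (distrib halfline G s) ?m} \<subseteq> range_int M" for s
    unfolding range_int_eq by auto
  have leb: "{t::real. 0 \<le> t \<and> ennreal t < c} \<in> sets lebesgue" for c
    using ivl_sets by simp
  show "\<Phi> \<in> borel_measurable M"
    by (rule borel_measurableI_greater) (use key mp2[OF sub leb] in auto)
  show "distrib M \<Phi> s = min (distrib halfline G s) ?m"
  proof -
    let ?E = "{t. 0 \<le> t \<and> ennreal t < min (distrib halfline G s) ?m}"
    have "distrib M \<Phi> s = emeasure M (\<sigma> -` ?E \<inter> space M)"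
      unfolding distrib_def key[of s] by simp
    also have "\<dots> = emeasure lebesgue ?E" using mp2[OF sub leb] by blast
    also have "\<dots> = min (distrib halfline G s) ?m" by (rule emeasure_ivl_lebesgue)
    finally show ?thesis .
  qed
qed

lemma NA_rearr:
  assumes mp: "meas_pres_onto M \<sigma>" and G: "G \<in> borel_measurable halfline"
    and t: "ennreal t < emeasure M (space M)"
  shows "rearr M (\<lambda>x. rearr halfline G (\<sigma> x) * indicator (range_int M) (\<sigma> x)) t = rearr halfline G t"
proof (rule eq_by_le)
  fix s
  show "rearr M (\<lambda>x. rearr halfline G (\<sigma> x) * indicator (range_int M) (\<sigma> x)) t \<le> s \<longleftrightarrow> rearr halfline G t \<le> s"
    unfolding rearr_le_iff[OF NA_dist(1)[OF mp G]] rearr_le_iff[OF G] NA_dist(2)[OF mp G]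
    using t by (auto simp: min_le_iff_disj)
qed



lemma SUP_match:
  fixes F :: "'x \<Rightarrow> ennreal" and F' :: "'y \<Rightarrow> ennreal"
  assumes "\<And>g. g \<in> G \<Longrightarrow> \<exists>g'\<in>G'. F g \<le> F' g'" "\<And>g'. g' \<in> G' \<Longrightarrow> \<exists>g\<in>G. F' g' \<le> F g"
  shows "(SUP g\<in>G. F g) = (SUP g\<in>G'. F' g)"
  by (intro antisym SUP_mono) (use assms in auto)

lemma halfline_meas: "f \<in> borel_measurable M \<Longrightarrow> rearr M f \<in> borel_measurable halfline"
  unfolding halfline_def by (rule rearr_meas_on)

lemma main_NA:
  assumes ri: "rearr_inv M N" and mp: "meas_pres_onto M \<sigma>"
    and Nb: "Nbar = Xbar_nonatomic M N \<sigma>" and f: "f \<in> borel_measurable M"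
  shows "assoc_norm M N f = assoc_norm halfline Nbar (rearr M f)"
  unfolding assoc_norm_def rearr_rearr[OF f]
proof (rule SUP_match)
  let ?m = "emeasure M (space M)"
  fix g assume g: "g \<in> {g \<in> borel_measurable M. N g \<le> 1}"
  then have gm: "g \<in> borel_measurable M" and Ng: "N g \<le> 1" by auto
  define g' where "g' = rearr M g"
  have g'm: "g' \<in> borel_measurable halfline" unfolding g'_def by (rule halfline_meas[OF gm])
  define \<Phi> where "\<Phi> = (\<lambda>x. rearr halfline g' (\<sigma> x) * indicator (range_int M) (\<sigma> x))"
  have \<Phi>m: "\<Phi> \<in> borel_measurable M" unfolding \<Phi>_def by (rule NA_dist(1)[OF mp g'm])
  have "distrib M \<Phi> s = distrib M g s" for s
  proof -
    have "distrib M \<Phi> s = min (distrib halfline g' s) ?m"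
      unfolding \<Phi>_def by (rule NA_dist(2)[OF mp g'm])
    also have "distrib halfline g' s = distrib M g s"
      unfolding g'_def by (rule distrib_rearr[OF gm])
    finally show ?thesis using distrib_le_space[OF gm, of s] by (simp add: min_absorb1)
  qed
  then have "rearr M \<Phi> = rearr M g" by (intro rearr_cong_distrib) auto
  then have "\<forall>t\<ge>0. rearr M \<Phi> t = rearr M g t" by simp
  then have "N \<Phi> = N g" using ri \<Phi>m gm unfolding rearr_inv_def by blast
  then have "Nbar g' \<le> 1" unfolding Nb Xbar_nonatomic_def \<Phi>_def[symmetric] using Ng by simp
  have "rearr halfline g' = rearr M g" unfolding g'_def by (rule rearr_rearr[OF gm])
  show "\<exists>g'\<in>{g \<in> borel_measurable halfline. Nbar g \<le> 1}.
     (\<integral>\<^sup>+ t. rearr M f t * rearr M g t \<partial>halfline) \<le> (\<integral>\<^sup>+ t. rearr M f t * rearr halfline g' t \<partial>halfline)"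
  proof (rule bexI[of _ g'])
    show "g' \<in> {g \<in> borel_measurable halfline. Nbar g \<le> 1}" using g'm \<open>Nbar g' \<le> 1\<close> by simp
    show "(\<integral>\<^sup>+ t. rearr M f t * rearr M g t \<partial>halfline) \<le> (\<integral>\<^sup>+ t. rearr M f t * rearr halfline g' t \<partial>halfline)"
      unfolding \<open>rearr halfline g' = rearr M g\<close> by (rule order.refl)
  qed
next
  let ?m = "emeasure M (space M)"
  fix g' assume g': "g' \<in> {g \<in> borel_measurable halfline. Nbar g \<le> 1}"
  then have g'm: "g' \<in> borel_measurable halfline" and Ng: "Nbar g' \<le> 1" by auto
  define \<Phi> where "\<Phi> = (\<lambda>x. rearr halfline g' (\<sigma> x) * indicator (range_int M) (\<sigma> x))"
  have \<Phi>m: "\<Phi> \<in> borel_measurable M" unfolding \<Phi>_def by (rule NA_dist(1)[OF mp g'm])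
  have "N \<Phi> \<le> 1" using Ng unfolding Nb Xbar_nonatomic_def \<Phi>_def by simp
  have eqI: "(\<integral>\<^sup>+ t. rearr M f t * rearr halfline g' t \<partial>halfline) = (\<integral>\<^sup>+ t. rearr M f t * rearr M \<Phi> t \<partial>halfline)"
  proof (rule nn_integral_cong)
    fix t assume "t \<in> space halfline"
    show "rearr M f t * rearr halfline g' t = rearr M f t * rearr M \<Phi> t"
    proof (cases "ennreal t < ?m")
      case True
      then show ?thesis unfolding \<Phi>_def using NA_rearr[OF mp g'm True] by simp
    next
      case False
      then show ?thesis using rearr_zero[OF f, of t] by simp
    qed
  qed
  show "\<exists>g\<in>{g \<in> borel_measurable M. N g \<le> 1}.
     (\<integral>\<^sup>+ t. rearr M f t * rearr halfline g' t \<partial>halfline) \<le> (\<integral>\<^sup>+ t. rearr M f t * rearr M g t \<partial>halfline)"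
  proof (rule bexI[of _ \<Phi>])
    show "\<Phi> \<in> {g \<in> borel_measurable M. N g \<le> 1}" using \<Phi>m \<open>N \<Phi> \<le> 1\<close> by simp
  qed (rule eq_refl[OF eqI])
qed



lemma ae_facts:
  assumes "atom_enum M \<beta> e"
  shows "0 < \<beta>" "\<And>n. n \<in> atom_index M \<beta> \<Longrightarrow> e n \<in> sets M"
    "\<And>n. n \<in> atom_index M \<beta> \<Longrightarrow> emeasure M (e n) = ennreal \<beta>"
    "\<And>n. n \<in> atom_index M \<beta> \<Longrightarrow> atom M (e n)"
    "disjoint_family_on e (atom_index M \<beta>)" "(\<Union>n\<in>atom_index M \<beta>. e n) = space M"
  using assms by (auto simp: atom_enum_def atom_def)

lemma count_UNIV: "emeasure (count_space UNIV) J = (if finite J then of_nat (card J) else \<infinity>)"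
  by (rule emeasure_count_space) auto

lemma count_sub: "J \<subseteq> I \<Longrightarrow> emeasure (count_space I) J = emeasure (count_space UNIV) J"
  by (simp add: emeasure_count_space count_UNIV)

lemma union_meas:
  assumes ae: "atom_enum M \<beta> e" and J: "J \<subseteq> atom_index M \<beta>"
  shows "(\<Union>n\<in>J. e n) \<in> sets M" "emeasure M (\<Union>n\<in>J. e n) = ennreal \<beta> * emeasure (count_space UNIV) J"
proof -
  have cJ: "countable J" by (rule countable_subset[OF subset_UNIV]) simp
  have es: "\<And>i. i \<in> J \<Longrightarrow> e i \<in> sets M" using ae_facts(2)[OF ae] J by auto
  show "(\<Union>n\<in>J. e n) \<in> sets M" using es cJ by (intro sets.countable_UN'') auto
  have dj: "disjoint_family_on e J" using disjoint_family_on_mono[OF J ae_facts(5)[OF ae]] .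
  have "emeasure M (\<Union>n\<in>J. e n) = (\<integral>\<^sup>+i. emeasure M (e i) \<partial>count_space J)"
    by (rule emeasure_UN_countable[OF es cJ dj])
  also have "\<dots> = (\<integral>\<^sup>+i. ennreal \<beta> \<partial>count_space J)"
    by (rule nn_integral_cong) (use ae_facts(3)[OF ae] J in auto)
  also have "\<dots> = ennreal \<beta> * emeasure (count_space UNIV) J"
    using count_sub[of J J] by (simp add: nn_integral_const)
  finally show "emeasure M (\<Union>n\<in>J. e n) = ennreal \<beta> * emeasure (count_space UNIV) J" .
qed

lemma atom_val:
  assumes ae: "atom_enum M \<beta> e" and n: "n \<in> atom_index M \<beta>" and B: "B \<in> sets M" "B \<subseteq> e n"
  shows "emeasure M B = 0 \<or> emeasure M B = ennreal \<beta>"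
proof -
  have "emeasure M B = 0 \<or> emeasure M (e n - B) = 0"
    using ae_facts(4)[OF ae n] B unfolding atom_def by auto
  moreover have "emeasure M (e n - B) = 0 \<Longrightarrow> emeasure M B = ennreal \<beta>"
  proof -
    assume z: "emeasure M (e n - B) = 0"
    have "emeasure M (e n - (e n - B)) = emeasure M (e n)"
      by (rule emeasure_Diff_null_set) (use z ae_facts(2)[OF ae n] B in auto)
    moreover have "e n - (e n - B) = B" using B by auto
    ultimately show ?thesis using ae_facts(3)[OF ae n] by simp
  qed
  ultimately show ?thesis by blast
qed

lemma AT_mult:
  assumes ae: "atom_enum M \<beta> e" and A: "A \<in> sets M"
  shows "\<exists>J \<subseteq> atom_index M \<beta>. emeasure M A = ennreal \<beta> * emeasure (count_space UNIV) J"
proof -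
  let ?I = "atom_index M \<beta>"
  define J where "J = {n \<in> ?I. emeasure M (A \<inter> e n) \<noteq> 0}"
  have cI: "countable ?I" by (rule countable_subset[OF subset_UNIV]) simp
  have AU: "A = (\<Union>n\<in>?I. A \<inter> e n)" using sets.sets_into_space[OF A] ae_facts(6)[OF ae] by auto
  have dj: "disjoint_family_on (\<lambda>n. A \<inter> e n) ?I"
    using ae_facts(5)[OF ae] unfolding disjoint_family_on_def by auto
  have "emeasure M A = emeasure M (\<Union>n\<in>?I. A \<inter> e n)" using AU by simp
  also have "\<dots> = (\<integral>\<^sup>+n. emeasure M (A \<inter> e n) \<partial>count_space ?I)"
    by (rule emeasure_UN_countable[OF _ cI dj]) (use A ae_facts(2)[OF ae] in auto)
  also have "\<dots> = (\<integral>\<^sup>+n. ennreal \<beta> * indicator J n \<partial>count_space ?I)"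
  proof (rule nn_integral_cong)
    fix n assume "n \<in> space (count_space ?I)"
    then have n: "n \<in> ?I" by simp
    have "emeasure M (A \<inter> e n) = 0 \<or> emeasure M (A \<inter> e n) = ennreal \<beta>"
      by (rule atom_val[OF ae n]) (use A ae_facts(2)[OF ae n] in auto)
    then show "emeasure M (A \<inter> e n) = ennreal \<beta> * indicator J n"
      using n ae_facts(1)[OF ae] unfolding J_def by (auto simp: indicator_def)
  qed
  also have "\<dots> = ennreal \<beta> * emeasure (count_space ?I) J"
    by (rule nn_integral_cmult_indicator) (auto simp: J_def)
  also have "\<dots> = ennreal \<beta> * emeasure (count_space UNIV) J"
    using count_sub[of J ?I] by (simp add: J_def)
  finally have eq: "emeasure M A = ennreal \<beta> * emeasure (count_space UNIV) J" .
  have "J \<subseteq> ?I" unfolding J_def by blast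
  then show ?thesis using eq by blast
qed

lemma mult_le:
  assumes b: "0 < \<beta>" and t: "\<beta> * real n \<le> t" "t < \<beta> * real (Suc n)"
  shows "ennreal \<beta> * emeasure (count_space UNIV) J \<le> ennreal t \<longleftrightarrow>
         ennreal \<beta> * emeasure (count_space UNIV) J \<le> ennreal (\<beta> * real n)"
proof (cases "finite J")
  case True
  have "0 \<le> \<beta> * real n" using b by simp
  then have t0: "0 \<le> t" using t by linarith
  have "ennreal \<beta> * emeasure (count_space UNIV) J = ennreal (\<beta> * real (card J))"
    using True b by (simp add: count_UNIV ennreal_mult ennreal_of_nat_eq_real_of_nat)
  moreover have "\<beta> * real (card J) \<le> t \<longleftrightarrow> \<beta> * real (card J) \<le> \<beta> * real n"
  proof
    assume "\<beta> * real (card J) \<le> t"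
    then have "\<beta> * real (card J) < \<beta> * real (Suc n)" using t by linarith
    then have "card J < Suc n" using b by (simp add: mult_less_cancel_left_pos)
    then show "\<beta> * real (card J) \<le> \<beta> * real n" using b by simp
  qed (use t in linarith)
  ultimately show ?thesis using t0 b by (simp add: ennreal_le_iff)
next
  case False
  then show ?thesis using b by (simp add: count_UNIV ennreal_mult_top top_unique)
qed

lemma AT_const:
  assumes ae: "atom_enum M \<beta> e" and g: "g \<in> borel_measurable M"
    and t: "\<beta> * real n \<le> t" "t < \<beta> * real (Suc n)"
  shows "rearr M g t = rearr M g (\<beta> * real n)"
proof (rule eq_by_le)
  fix s
  have "{x \<in> space M. s < g x} \<in> sets M" using g by measurable
  then obtain J where "J \<subseteq> atom_index M \<beta>" and J0: "emeasure M {x \<in> space M. s < g x} = ennreal \<beta> * emeasure (count_space UNIV) J"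
    using AT_mult[OF ae] by blast
  then have J: "distrib M g s = ennreal \<beta> * emeasure (count_space UNIV) J" unfolding distrib_def by simp
  show "rearr M g t \<le> s \<longleftrightarrow> rearr M g (\<beta> * real n) \<le> s"
    unfolding rearr_le_iff[OF g] J using mult_le[OF ae_facts(1)[OF ae] t] .
qed



lemma floor_ivl:
  assumes b: "0 < (\<beta>::real)" and t: "0 \<le> t"
  shows "\<exists>n. \<beta> * real n \<le> t \<and> t < \<beta> * real (Suc n)"
proof -
  define n where "n = nat \<lfloor>t / \<beta>\<rfloor>"
  have rn: "real n = of_int \<lfloor>t / \<beta>\<rfloor>" unfolding n_def using b t by simp
  have "real n \<le> t / \<beta>" unfolding rn by simp
  then have 1: "\<beta> * real n \<le> t" using b by (simp add: field_simps)
  have "t / \<beta> < real n + 1" unfolding rn by linarith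
  then have 2: "t < \<beta> * real (Suc n)" using b by (simp add: field_simps)
  show ?thesis using 1 2 by blast
qed

lemma I_down: "n \<in> atom_index M \<beta> \<Longrightarrow> k \<le> n \<Longrightarrow> 0 \<le> \<beta> \<Longrightarrow> k \<in> atom_index M \<beta>"
  unfolding atom_index_def
proof -
  assume a: "n \<in> {n. ennreal (\<beta> * real n) < emeasure M (space M)}" "k \<le> n" "0 \<le> \<beta>"
  have "\<beta> * real k \<le> \<beta> * real n" using a by (intro mult_left_mono) auto
  then have "ennreal (\<beta> * real k) \<le> ennreal (\<beta> * real n)" by (rule ennreal_leI)
  then show "k \<in> {n. ennreal (\<beta> * real n) < emeasure M (space M)}" using a(1)
    by (auto intro: order.strict_trans1)
qed

lemma I_sub:
  assumes ae: "atom_enum M \<beta> e" and n: "n \<in> atom_index M \<beta>"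
  shows "ennreal (\<beta> * real (Suc n)) \<le> emeasure M (space M)"
proof -
  let ?I = "atom_index M \<beta>"
  have b: "0 < \<beta>" by (rule ae_facts(1)[OF ae])
  have m: "emeasure M (space M) = ennreal \<beta> * emeasure (count_space UNIV) ?I"
    using union_meas(2)[OF ae order.refl] ae_facts(6)[OF ae] by simp
  show ?thesis
  proof (cases "finite ?I")
    case True
    have "{..n} \<subseteq> ?I" using I_down[OF n] b by auto
    then have "card {..n} \<le> card ?I" using True by (rule card_mono[rotated])
    then have "Suc n \<le> card ?I" by simp
    then have "\<beta> * real (Suc n) \<le> \<beta> * real (card ?I)" using b by simp
    then show ?thesis unfolding m using True b
      by (simp add: count_UNIV ennreal_mult[symmetric] ennreal_of_nat_eq_real_of_nat ennreal_leI)
  next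
    case False
    then show ?thesis unfolding m using b by (simp add: count_UNIV ennreal_mult_top top_unique)
  qed
qed

lemma notin_I: "n \<notin> atom_index M \<beta> \<Longrightarrow> emeasure M (space M) \<le> ennreal (\<beta> * real n)"
  unfolding atom_index_def by auto

lemma h_meas: assumes G: "G \<in> borel_measurable halfline"
  shows "(\<lambda>t. rearr halfline G t * indicator R t) \<in> borel_measurable (lebesgue_on R)"
proof -
  have "rearr halfline G \<in> borel_measurable (lebesgue_on R)" by (rule rearr_meas_on[OF G])
  moreover have "indicator R \<in> borel_measurable (lebesgue_on R)"
    by (rule borel_measurable_indicator) simp
  ultimately show ?thesis by (rule borel_measurable_times_ennreal)
qed

lemma LR:
  assumes G: "G \<in> borel_measurable halfline"
  shows "distrib (lebesgue_on (range_int M)) (\<lambda>t. rearr halfline G t * indicator (range_int M) t) s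
     = min (distrib halfline G s) (emeasure M (space M))"
proof -
  let ?E = "{t. 0 \<le> t \<and> ennreal t < min (distrib halfline G s) (emeasure M (space M))}"
  have se: "{t \<in> space (lebesgue_on (range_int M)). s < rearr halfline G t * indicator (range_int M) t} = ?E"
    using rearr_less_iff[OF G] unfolding range_int_eq by (auto simp: indicator_def)
  have "distrib (lebesgue_on (range_int M)) (\<lambda>t. rearr halfline G t * indicator (range_int M) t) s
      = emeasure (lebesgue_on (range_int M)) ?E" unfolding distrib_def se ..
  also have "\<dots> = emeasure lebesgue ?E"
    by (rule emeasure_restrict_space) (use range_int_sets in \<open>auto simp: range_int_eq\<close>)
  also have "\<dots> = min (distrib halfline G s) (emeasure M (space M))" by (rule emeasure_ivl_lebesgue)
  finally show ?thesis .
qed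

lemma H_eq:
  assumes G: "G \<in> borel_measurable halfline" and t: "ennreal t < emeasure M (space M)"
  shows "rearr (lebesgue_on (range_int M)) (\<lambda>t. rearr halfline G t * indicator (range_int M) t) t = rearr halfline G t"
proof (rule eq_by_le)
  fix s
  show "rearr (lebesgue_on (range_int M)) (\<lambda>t. rearr halfline G t * indicator (range_int M) t) t \<le> s \<longleftrightarrow> rearr halfline G t \<le> s"
    unfolding rearr_le_iff[OF h_meas[OF G]] rearr_le_iff[OF G] LR[OF G]
    using t by (auto simp: min_le_iff_disj)
qed

lemma T_val:
  assumes ae: "atom_enum M \<beta> e" and n: "n \<in> atom_index M \<beta>" and x: "x \<in> e n"
    and G: "G \<in> borel_measurable halfline"
  shows "T_op M \<beta> e (\<lambda>t. rearr halfline G t * indicator (range_int M) t) x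
     = ennreal (1 / \<beta>) * (\<integral>\<^sup>+t\<in>{\<beta> * real n ..< \<beta> * real (Suc n)}. rearr halfline G t \<partial>lebesgue)"
proof -
  let ?I = "atom_index M \<beta>"
  let ?H = "rearr (lebesgue_on (range_int M)) (\<lambda>t. rearr halfline G t * indicator (range_int M) t)"
  define c where "c k = ennreal (1 / \<beta>) * (\<integral>\<^sup>+t\<in>{\<beta> * real k ..< \<beta> * real (Suc k)}. ?H t \<partial>lebesgue)" for k
  have "T_op M \<beta> e (\<lambda>t. rearr halfline G t * indicator (range_int M) t) x
      = (\<Sum>k. (if k \<in> ?I then indicator (e k) x else 0) * c k)"
    unfolding T_op_def c_def by simp
  also have "\<dots> = (\<Sum>k\<in>{n}. (if k \<in> ?I then indicator (e k) x else 0) * c k)"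
  proof (rule suminf_finite)
    fix k assume "k \<notin> {n}"
    then have "k \<noteq> n" by simp
    then have "x \<notin> e k" if "k \<in> ?I" using ae_facts(5)[OF ae] n x that
      unfolding disjoint_family_on_def by blast
    then show "(if k \<in> ?I then indicator (e k) x else 0) * c k = 0" by auto
  qed simp
  also have "\<dots> = c n" using n x by simp
  also have "\<dots> = ennreal (1 / \<beta>) * (\<integral>\<^sup>+t\<in>{\<beta> * real n ..< \<beta> * real (Suc n)}. rearr halfline G t \<partial>lebesgue)"
    unfolding c_def
  proof (intro arg_cong[where f="\<lambda>z. ennreal (1 / \<beta>) * z"] nn_integral_cong)
    fix t
    show "?H t * indicator {\<beta> * real n..<\<beta> * real (Suc n)} t = rearr halfline G t * indicator {\<beta> * real n..<\<beta> * real (Suc n)} t"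
    proof (cases "t \<in> {\<beta> * real n..<\<beta> * real (Suc n)}")
      case True
      have "0 < \<beta> * real (Suc n)" using ae_facts(1)[OF ae] by simp
      then have "ennreal t < ennreal (\<beta> * real (Suc n))"
        by (rule ennreal_lessI) (use True in simp)
      then have tm: "ennreal t < emeasure M (space M)" using I_sub[OF ae n] by (rule order.strict_trans2)
      show ?thesis using H_eq[OF G tm] by simp
    qed simp
  qed
  finally show ?thesis .
qed

lemma step_dist:
  assumes ae: "atom_enum M \<beta> e" and \<Psi>: "\<And>n x. n \<in> atom_index M \<beta> \<Longrightarrow> x \<in> e n \<Longrightarrow> \<Psi> x = a n"
  shows "\<Psi> \<in> borel_measurable M"
    "distrib M \<Psi> s = ennreal \<beta> * emeasure (count_space UNIV) {n \<in> atom_index M \<beta>. s < a n}"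
proof -
  let ?I = "atom_index M \<beta>"
  have set: "{x \<in> space M. s < \<Psi> x} = (\<Union>n\<in>{n \<in> ?I. s < a n}. e n)" for s
  proof
    show "{x \<in> space M. s < \<Psi> x} \<subseteq> (\<Union>n\<in>{n \<in> ?I. s < a n}. e n)"
    proof
      fix x assume x: "x \<in> {x \<in> space M. s < \<Psi> x}"
      then obtain n where n: "n \<in> ?I" "x \<in> e n" using ae_facts(6)[OF ae] by blast
      then have "\<Psi> x = a n" by (rule \<Psi>)
      then show "x \<in> (\<Union>n\<in>{n \<in> ?I. s < a n}. e n)" using n x by auto
    qed
    show "(\<Union>n\<in>{n \<in> ?I. s < a n}. e n) \<subseteq> {x \<in> space M. s < \<Psi> x}"
    proof
      fix x assume "x \<in> (\<Union>n\<in>{n \<in> ?I. s < a n}. e n)"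
      then obtain n where n: "n \<in> ?I" "s < a n" "x \<in> e n" by blast
      have "x \<in> space M" using n ae_facts(6)[OF ae] by blast
      moreover have "\<Psi> x = a n" using n by (intro \<Psi>)
      ultimately show "x \<in> {x \<in> space M. s < \<Psi> x}" using n by simp
    qed
  qed
  show "\<Psi> \<in> borel_measurable M"
  proof (rule borel_measurableI_greater)
    fix y
    have "(\<Union>n\<in>{n \<in> ?I. y < a n}. e n) \<in> sets M" by (rule union_meas(1)[OF ae]) blast
    then show "{x \<in> space M. y < \<Psi> x} \<in> sets M" unfolding set .
  qed
  show "distrib M \<Psi> s = ennreal \<beta> * emeasure (count_space UNIV) {n \<in> ?I. s < a n}"
    unfolding distrib_def set by (rule union_meas(2)[OF ae]) auto
qed

lemma step_rearr:
  assumes ae: "atom_enum M \<beta> e" and \<Psi>: "\<And>n x. n \<in> atom_index M \<beta> \<Longrightarrow> x \<in> e n \<Longrightarrow> \<Psi> x = a n"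
    and anti: "\<And>i j. i \<le> j \<Longrightarrow> a j \<le> a i"
    and n: "n \<in> atom_index M \<beta>" and t: "\<beta> * real n \<le> t" "t < \<beta> * real (Suc n)"
  shows "rearr M \<Psi> t = a n"
proof (rule eq_by_le)
  fix s
  let ?I = "atom_index M \<beta>"
  let ?J = "{k \<in> ?I. s < a k}"
  have b: "0 < \<beta>" by (rule ae_facts(1)[OF ae])
  have "0 \<le> \<beta> * real n" using b by simp
  then have t0: "0 \<le> t" using t by linarith
  have "ennreal \<beta> * emeasure (count_space UNIV) ?J \<le> ennreal t \<longleftrightarrow> a n \<le> s"
  proof
    assume le: "ennreal \<beta> * emeasure (count_space UNIV) ?J \<le> ennreal t"
    show "a n \<le> s"
    proof (rule ccontr)
      assume "\<not> a n \<le> s"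
      then have sn: "s < a n" by simp
      have sub: "{..n} \<subseteq> ?J"
      proof
        fix k assume "k \<in> {..n}"
        then have "k \<le> n" by simp
        then show "k \<in> ?J" using I_down[OF n _ less_imp_le[OF b]] anti[of k n] sn
          by (auto intro: order.strict_trans2)
      qed
      show False
      proof (cases "finite ?J")
        case True
        have "card {..n} \<le> card ?J" using True sub by (rule card_mono)
        then have "\<beta> * real (Suc n) \<le> \<beta> * real (card ?J)" using b by simp
        moreover have "\<beta> * real (card ?J) \<le> t"
          using le True b t0 by (simp add: count_UNIV ennreal_mult[symmetric] ennreal_of_nat_eq_real_of_nat ennreal_le_iff)
        ultimately show False using t by linarith
      next
        case False
        then show False using le b by (simp add: count_UNIV ennreal_mult_top top_unique)
      qed
    qed
  next
    assume ans: "a n \<le> s"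
    have sub: "?J \<subseteq> {..<n}"
    proof
      fix k assume k: "k \<in> ?J"
      show "k \<in> {..<n}"
      proof (rule ccontr)
        assume "k \<notin> {..<n}"
        then have "n \<le> k" by simp
        then have "a k \<le> s" using anti[of n k] ans by simp
        then show False using k by (simp add: not_less[symmetric])
      qed
    qed
    then have fin: "finite ?J" by (rule finite_subset) simp
    have "card ?J \<le> card {..<n}" using sub by (rule card_mono[rotated]) simp
    then have "real (card ?J) \<le> real n" by simp
    then have "\<beta> * real (card ?J) \<le> \<beta> * real n" using b by (intro mult_left_mono) auto
    then have "\<beta> * real (card ?J) \<le> t" using t by linarith
    then show "ennreal \<beta> * emeasure (count_space UNIV) ?J \<le> ennreal t"
      using fin b by (simp add: count_UNIV ennreal_mult[symmetric] ennreal_of_nat_eq_real_of_nat ennreal_leI)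
  qed
  moreover have "rearr M \<Psi> t \<le> s \<longleftrightarrow> distrib M \<Psi> s \<le> ennreal t"
    by (rule rearr_le_iff[OF step_dist(1)[OF ae \<Psi>]])
  moreover have "distrib M \<Psi> s = ennreal \<beta> * emeasure (count_space UNIV) ?J"
    by (rule step_dist(2)[OF ae \<Psi>])
  ultimately show "rearr M \<Psi> t \<le> s \<longleftrightarrow> a n \<le> s" by simp
qed



lemma ivl_unique:
  assumes b: "0 < (\<beta>::real)" and "\<beta> * real n \<le> t" "t < \<beta> * real (Suc n)"
    and "\<beta> * real k \<le> t" "t < \<beta> * real (Suc k)"
  shows "k = n"
proof -
  have "\<beta> * real n < \<beta> * real (Suc k)" "\<beta> * real k < \<beta> * real (Suc n)" using assms by linarith+
  then have "n < Suc k" "k < Suc n" using b by (simp_all add: mult_less_cancel_left_pos)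
  then show ?thesis by simp
qed

lemma rearr_leb: "f \<in> borel_measurable M \<Longrightarrow> rearr M f \<in> borel_measurable lebesgue"
proof -
  assume f: "f \<in> borel_measurable M"
  have "rearr M f \<in> borel_measurable lborel" using rearr_borel[OF f] by simp
  then show ?thesis by (rule measurable_completion)
qed

lemma PART:
  assumes b: "0 < (\<beta>::real)" and F: "F \<in> borel_measurable lebesgue"
  shows "(\<integral>\<^sup>+t. F t \<partial>halfline) = (\<Sum>n. \<integral>\<^sup>+t\<in>{\<beta> * real n ..< \<beta> * real (Suc n)}. F t \<partial>lebesgue)"
proof -
  let ?In = "\<lambda>n. {\<beta> * real n ..< \<beta> * real (Suc n)}"
  have ind: "indicator {0..} t = (\<Sum>n. indicator (?In n) t :: ennreal)" for t :: real
  proof (cases "0 \<le> t")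
    case True
    obtain n where n: "\<beta> * real n \<le> t" "t < \<beta> * real (Suc n)" using floor_ivl[OF b True] by blast
    have "(\<Sum>k. indicator (?In k) t :: ennreal) = (\<Sum>k\<in>{n}. indicator (?In k) t)"
    proof (rule suminf_finite)
      fix k assume "k \<notin> {n}"
      then show "indicator (?In k) t = (0::ennreal)" using ivl_unique[OF b n, of k] by (auto simp: indicator_def)
    qed simp
    then show ?thesis using n True by simp
  next
    case False
    have "\<beta> * real k \<ge> 0" for k using b by simp
    then have "t \<notin> ?In k" for k using False by (metis atLeastLessThan_iff linorder_not_le order.trans)
    then have "indicator (?In k) t = (0::ennreal)" for k by simp
    then show ?thesis using False by simp
  qed
  have "(\<integral>\<^sup>+t. F t \<partial>halfline) = (\<integral>\<^sup>+t. F t * indicator {0..} t \<partial>lebesgue)"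
    unfolding halfline_def by (rule nn_integral_restrict_space) simp
  also have "\<dots> = (\<integral>\<^sup>+t. (\<Sum>n. F t * indicator (?In n) t) \<partial>lebesgue)"
    unfolding ind by (simp add: ennreal_suminf_cmult)
  also have "\<dots> = (\<Sum>n. \<integral>\<^sup>+t. F t * indicator (?In n) t \<partial>lebesgue)"
    by (rule nn_integral_suminf) (intro borel_measurable_times_ennreal F borel_measurable_indicator, simp)
  finally show ?thesis .
qed



lemma Ico_meas: "0 < (\<beta>::real) \<Longrightarrow> emeasure lebesgue {\<beta> * real n ..< \<beta> * real (Suc n)} = ennreal \<beta>"
  by (simp add: algebra_simps)

lemma cmult_Ico:
  assumes b: "0 < (\<beta>::real)"
  shows "(\<integral>\<^sup>+t. c * indicator {\<beta> * real n ..< \<beta> * real (Suc n)} t \<partial>lebesgue) = c * ennreal \<beta>"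
proof -
  have "{\<beta> * real n ..< \<beta> * real (Suc n)} \<in> sets lebesgue" by simp
  then have "(\<integral>\<^sup>+t. c * indicator {\<beta> * real n ..< \<beta> * real (Suc n)} t \<partial>lebesgue)
      = c * emeasure lebesgue {\<beta> * real n ..< \<beta> * real (Suc n)}" by (rule nn_integral_cmult_indicator)
  also have "emeasure lebesgue {\<beta> * real n ..< \<beta> * real (Suc n)} = ennreal \<beta>" by (rule Ico_meas[OF b])
  finally show ?thesis .
qed

lemma inv_cancel: "0 < (\<beta>::real) \<Longrightarrow> ennreal (1 / \<beta>) * (c * ennreal \<beta>) = c"
proof -
  assume b: "0 < \<beta>"
  have "ennreal (1 / \<beta>) * ennreal \<beta> = ennreal (1 / \<beta> * \<beta>)" using ennreal_mult[of "1/\<beta>" \<beta>] b by simp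
  also have "\<dots> = 1" using b by simp
  finally have "ennreal (1 / \<beta>) * ennreal \<beta> = 1" .
  then show ?thesis by (simp add: mult.commute mult.left_commute)
qed

lemma inv_cancel2: "0 < (\<beta>::real) \<Longrightarrow> (ennreal (1 / \<beta>) * c) * ennreal \<beta> = c"
  using inv_cancel[of \<beta> c] by (simp add: mult.assoc)

lemma main_AT:
  assumes ri: "rearr_inv M N" and ae: "atom_enum M \<beta> e"
    and Nb: "Nbar = Xbar_atomic M N \<beta> e" and f: "f \<in> borel_measurable M"
  shows "assoc_norm M N f = assoc_norm halfline Nbar (rearr M f)"
  unfolding assoc_norm_def rearr_rearr[OF f]
proof (rule SUP_match)
  let ?m = "emeasure M (space M)"
  let ?I = "atom_index M \<beta>"
  let ?In = "\<lambda>n. {\<beta> * real n ..< \<beta> * real (Suc n)}"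
  have b: "0 < \<beta>" by (rule ae_facts(1)[OF ae])
  fix g assume g: "g \<in> {g \<in> borel_measurable M. N g \<le> 1}"
  then have gm: "g \<in> borel_measurable M" and Ng: "N g \<le> 1" by auto
  define g' where "g' = rearr M g"
  have g'm: "g' \<in> borel_measurable halfline" unfolding g'_def by (rule halfline_meas[OF gm])
  have rr: "rearr halfline g' = rearr M g" unfolding g'_def by (rule rearr_rearr[OF gm])
  define \<Psi> where "\<Psi> = T_op M \<beta> e (\<lambda>t. rearr halfline g' t * indicator (range_int M) t)"
  define a where "a n = rearr M g (\<beta> * real n)" for n
  have \<Psi>a: "\<Psi> x = a n" if n: "n \<in> ?I" and x: "x \<in> e n" for n x
  proof -
    have "\<Psi> x = ennreal (1 / \<beta>) * (\<integral>\<^sup>+t\<in>?In n. rearr halfline g' t \<partial>lebesgue)"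
      unfolding \<Psi>_def by (rule T_val[OF ae n x g'm])
    also have "(\<integral>\<^sup>+t\<in>?In n. rearr halfline g' t \<partial>lebesgue) = (\<integral>\<^sup>+t. a n * indicator (?In n) t \<partial>lebesgue)"
    proof (rule nn_integral_cong)
      fix t
      show "rearr halfline g' t * indicator (?In n) t = a n * indicator (?In n) t"
      proof (cases "t \<in> ?In n")
        case True
        then have "rearr M g t = rearr M g (\<beta> * real n)" by (intro AT_const[OF ae gm]) auto
        then show ?thesis unfolding rr a_def by simp
      qed simp
    qed
    also have "\<dots> = a n * ennreal \<beta>"
      by (rule cmult_Ico[OF b])
    finally show ?thesis using inv_cancel[OF b] by simp
  qed
  have anti: "a j \<le> a i" if "i \<le> j" for i j
    unfolding a_def using that b by (intro rearr_antimono) simp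
  have \<Psi>m: "\<Psi> \<in> borel_measurable M" by (rule step_dist(1)[OF ae \<Psi>a])
  have "rearr M \<Psi> t = rearr M g t" if t0: "t \<ge> 0" for t
  proof -
    obtain n where n: "\<beta> * real n \<le> t" "t < \<beta> * real (Suc n)" using floor_ivl[OF b t0] by blast
    show ?thesis
    proof (cases "n \<in> ?I")
      case True
      have "rearr M \<Psi> t = a n" by (rule step_rearr[OF ae \<Psi>a anti True n])
      also have "a n = rearr M g t" unfolding a_def using AT_const[OF ae gm n] by simp
      finally show ?thesis .
    next
      case False
      have "?m \<le> ennreal t" by (rule order.trans[OF notin_I[OF False] ennreal_leI[OF n(1)]])
      then show ?thesis using rearr_zero[OF \<Psi>m, of t] rearr_zero[OF gm, of t] by simp
    qed
  qed
  then have "\<forall>t\<ge>0. rearr M \<Psi> t = rearr M g t" by blast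
  then have "N \<Psi> = N g" using ri \<Psi>m gm unfolding rearr_inv_def by blast
  then have "Nbar g' \<le> 1" unfolding Nb Xbar_atomic_def \<Psi>_def[symmetric] using Ng by simp
  show "\<exists>g'\<in>{g \<in> borel_measurable halfline. Nbar g \<le> 1}.
     (\<integral>\<^sup>+ t. rearr M f t * rearr M g t \<partial>halfline) \<le> (\<integral>\<^sup>+ t. rearr M f t * rearr halfline g' t \<partial>halfline)"
  proof (rule bexI[of _ g'])
    show "g' \<in> {g \<in> borel_measurable halfline. Nbar g \<le> 1}" using g'm \<open>Nbar g' \<le> 1\<close> by simp
    show "(\<integral>\<^sup>+ t. rearr M f t * rearr M g t \<partial>halfline) \<le> (\<integral>\<^sup>+ t. rearr M f t * rearr halfline g' t \<partial>halfline)"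
      unfolding rr by (rule order.refl)
  qed
next
  let ?m = "emeasure M (space M)"
  let ?I = "atom_index M \<beta>"
  let ?In = "\<lambda>n. {\<beta> * real n ..< \<beta> * real (Suc n)}"
  have b: "0 < \<beta>" by (rule ae_facts(1)[OF ae])
  fix g' assume g': "g' \<in> {g \<in> borel_measurable halfline. Nbar g \<le> 1}"
  then have g'm: "g' \<in> borel_measurable halfline" and Ng: "Nbar g' \<le> 1" by auto
  define G where "G = rearr halfline g'"
  define \<Psi> where "\<Psi> = T_op M \<beta> e (\<lambda>t. rearr halfline g' t * indicator (range_int M) t)"
  define a where "a n = ennreal (1 / \<beta>) * (\<integral>\<^sup>+t\<in>?In n. G t \<partial>lebesgue)" for n
  have \<Psi>a: "\<Psi> x = a n" if n: "n \<in> ?I" and x: "x \<in> e n" for n x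
    unfolding \<Psi>_def a_def G_def by (rule T_val[OF ae n x g'm])
  have Gleb: "G \<in> borel_measurable lebesgue" unfolding G_def by (rule rearr_leb[OF g'm])
  have up: "(\<integral>\<^sup>+t\<in>?In k. G t \<partial>lebesgue) \<le> G (\<beta> * real k) * ennreal \<beta>" for k
  proof -
    have "(\<integral>\<^sup>+t\<in>?In k. G t \<partial>lebesgue) \<le> (\<integral>\<^sup>+t. G (\<beta> * real k) * indicator (?In k) t \<partial>lebesgue)"
      by (rule nn_integral_mono) (auto simp: G_def indicator_def intro: rearr_antimono)
    also have "\<dots> = G (\<beta> * real k) * ennreal \<beta>"
      by (rule cmult_Ico[OF b])
    finally show ?thesis .
  qed
  have low: "G (\<beta> * real (Suc k)) * ennreal \<beta> \<le> (\<integral>\<^sup>+t\<in>?In k. G t \<partial>lebesgue)" for k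
  proof -
    have "G (\<beta> * real (Suc k)) * ennreal \<beta> = (\<integral>\<^sup>+t. G (\<beta> * real (Suc k)) * indicator (?In k) t \<partial>lebesgue)"
      by (rule cmult_Ico[OF b, symmetric])
    also have "\<dots> \<le> (\<integral>\<^sup>+t\<in>?In k. G t \<partial>lebesgue)"
      by (rule nn_integral_mono) (auto simp: G_def indicator_def intro: rearr_antimono)
    finally show ?thesis .
  qed
  have anti: "a j \<le> a i" if "i \<le> j" for i j
  proof (cases "i = j")
    case False
    then have ij: "Suc i \<le> j" using that by simp
    have "(\<integral>\<^sup>+t\<in>?In j. G t \<partial>lebesgue) \<le> G (\<beta> * real j) * ennreal \<beta>" by (rule up)
    also have "\<dots> \<le> G (\<beta> * real (Suc i)) * ennreal \<beta>"
      unfolding G_def using ij b by (intro mult_right_mono rearr_antimono) auto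
    also have "\<dots> \<le> (\<integral>\<^sup>+t\<in>?In i. G t \<partial>lebesgue)" by (rule low)
    finally show ?thesis unfolding a_def by (rule mult_left_mono) simp
  qed simp
  have \<Psi>m: "\<Psi> \<in> borel_measurable M" by (rule step_dist(1)[OF ae \<Psi>a])
  have "N \<Psi> \<le> 1" using Ng unfolding Nb Xbar_atomic_def \<Psi>_def by simp
  have eqI: "(\<integral>\<^sup>+ t. rearr M f t * rearr halfline g' t \<partial>halfline) = (\<integral>\<^sup>+ t. rearr M f t * rearr M \<Psi> t \<partial>halfline)"
  proof -
    have m1: "(\<lambda>t. rearr M f t * G t) \<in> borel_measurable lebesgue"
      using rearr_leb[OF f] Gleb by (rule borel_measurable_times_ennreal)
    have m2: "(\<lambda>t. rearr M f t * rearr M \<Psi> t) \<in> borel_measurable lebesgue"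
      using rearr_leb[OF f] rearr_leb[OF \<Psi>m] by (rule borel_measurable_times_ennreal)
    have termeq: "(\<integral>\<^sup>+t\<in>?In n. rearr M f t * G t \<partial>lebesgue) = (\<integral>\<^sup>+t\<in>?In n. rearr M f t * rearr M \<Psi> t \<partial>lebesgue)" for n
    proof (cases "n \<in> ?I")
      case False
      have "rearr M f t = 0" if "t \<in> ?In n" for t
      proof -
        have "\<beta> * real n \<le> t" using that by simp
        then have "?m \<le> ennreal t" by (rule order.trans[OF notin_I[OF False] ennreal_leI])
        then show ?thesis by (rule rearr_zero[OF f])
      qed
      then show ?thesis by (intro nn_integral_cong) (auto simp: indicator_def)
    next
      case True
      let ?b = "rearr M f (\<beta> * real n)"
      have "(\<integral>\<^sup>+t\<in>?In n. rearr M f t * G t \<partial>lebesgue) = (\<integral>\<^sup>+t. ?b * (G t * indicator (?In n) t) \<partial>lebesgue)"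
      proof (rule nn_integral_cong)
        fix t
        show "rearr M f t * G t * indicator (?In n) t = ?b * (G t * indicator (?In n) t)"
        proof (cases "t \<in> ?In n")
          case True
          then have "rearr M f t = ?b" by (intro AT_const[OF ae f]) auto
          then show ?thesis by (simp add: mult.assoc)
        qed simp
      qed
      also have "\<dots> = ?b * (\<integral>\<^sup>+t\<in>?In n. G t \<partial>lebesgue)"
        by (rule nn_integral_cmult) (intro borel_measurable_times_ennreal Gleb borel_measurable_indicator, simp)
      also have "(\<integral>\<^sup>+t\<in>?In n. G t \<partial>lebesgue) = a n * ennreal \<beta>"
        unfolding a_def by (rule inv_cancel2[OF b, symmetric])
      also have "?b * (a n * ennreal \<beta>) = (\<integral>\<^sup>+t. (?b * a n) * indicator (?In n) t \<partial>lebesgue)"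
        by (subst cmult_Ico[OF b]) (simp add: mult.assoc)
      also have "\<dots> = (\<integral>\<^sup>+t\<in>?In n. rearr M f t * rearr M \<Psi> t \<partial>lebesgue)"
      proof (rule nn_integral_cong)
        fix t
        show "?b * a n * indicator (?In n) t = rearr M f t * rearr M \<Psi> t * indicator (?In n) t"
        proof (cases "t \<in> ?In n")
          case tin: True
          then have "rearr M f t = ?b" by (intro AT_const[OF ae f]) auto
          moreover have "rearr M \<Psi> t = a n" using tin by (intro step_rearr[OF ae \<Psi>a anti True]) auto
          ultimately show ?thesis by simp
        qed simp
      qed
      finally show ?thesis .
    qed
    show ?thesis unfolding PART[OF b m1[unfolded G_def]] PART[OF b m2] using termeq[unfolded G_def] by simp
  qed
  show "\<exists>g\<in>{g \<in> borel_measurable M. N g \<le> 1}.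
     (\<integral>\<^sup>+ t. rearr M f t * rearr halfline g' t \<partial>halfline) \<le> (\<integral>\<^sup>+ t. rearr M f t * rearr M g t \<partial>halfline)"
  proof (rule bexI[of _ \<Psi>])
    show "\<Psi> \<in> {g \<in> borel_measurable M. N g \<le> 1}" using \<Psi>m \<open>N \<Psi> \<le> 1\<close> by simp
  qed (rule eq_refl[OF eqI])
qed


theorem mainTheorem5:
  fixes M :: "'a measure" and N :: "('a \<Rightarrow> ennreal) \<Rightarrow> ennreal"
    and Nbar :: "(real \<Rightarrow> ennreal) \<Rightarrow> ennreal"
    and \<sigma> :: "'a \<Rightarrow> real" and \<beta> :: real and e :: "nat \<Rightarrow> 'a set"
    and f :: "'a \<Rightarrow> ennreal"
  assumes "sigma_finite_measure M"
    and "qBFN M N" and "rearr_inv M N" and "P5 M N"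
    and "(non_atomic M \<and> meas_pres_onto M \<sigma> \<and> Nbar = Xbar_nonatomic M N \<sigma>) \<or>
         (atom_enum M \<beta> e \<and> Nbar = Xbar_atomic M N \<beta> e)"
    and "f \<in> borel_measurable M"
  shows "assoc_norm M N f = assoc_norm halfline Nbar (rearr M f)"
  using assms(5)
proof
  assume H: "non_atomic M \<and> meas_pres_onto M \<sigma> \<and> Nbar = Xbar_nonatomic M N \<sigma>"
  show ?thesis by (rule main_NA[OF assms(3) _ _ assms(6)]) (use H in simp_all)
next
  assume H: "atom_enum M \<beta> e \<and> Nbar = Xbar_atomic M N \<beta> e"
  show ?thesis by (rule main_AT[OF assms(3) _ _ assms(6)]) (use H in simp_all)
qed

end
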